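(* Let $X$ have the $\Gamma(\alpha,1)$ distribution (density $x^{\alpha-1}e^{-x}/(\alpha-1)!$, $x\geq0$) with integer shape parameter $\alpha\geq 2$. For every integer $s\geq 2$, the tail of the $s$-iterated distribution induced by $X$ is $$\overline{T}_{X,s}(x)=e^{-x}+\frac{e^{-x}}{\binom{\alpha+s-2}{\alpha-1}}\sum_{\ell=1}^{\alpha-1}\binom{s+\alpha-\ell-2}{\alpha-\ell-1}\frac{x^\ell}{\ell!},\qquad x\geq 0.$$
   Context: For a nonnegative absolutely continuous random variable $X$ with density $f_X$, set $\overline{T}_{X,0}=f_X$, $\mu_{X,0}=1$, and for integers $s\geq 1$ define recursively $\overline{T}_{X,s}(x)=\frac{1}{\mu_{X,s-1}}\int_x^\infty\overline{T}_{X,s-1}(t)\,dt$ and $\mu_{X,s}=\int_0^\infty\overline{T}_{X,s}(t)\,dt$. $\overline{T}_{X,s}$ is the tail (survival function) of the $s$-iterated distribution induced by $X$. *)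

theory Defs
  imports "HOL-Analysis.Analysis"
begin

primrec iter_tail :: "(real \<Rightarrow> real) \<Rightarrow> nat \<Rightarrow> real \<Rightarrow> real" where
  "iter_tail f 0 = f"
| "iter_tail f (Suc s) =
     (\<lambda>x. integral {x..} (iter_tail f s) /
           (if s = 0 then 1 else integral {0..} (iter_tail f s)))"

definition iter_mu :: "(real \<Rightarrow> real) \<Rightarrow> nat \<Rightarrow> real" where
  "iter_mu f s = (if s = 0 then 1 else integral {0..} (iter_tail f s))"

lemma iter_tail_Suc: "iter_tail f (Suc s) x = integral {x..} (iter_tail f s) / iter_mu f s"
  by (simp add: iter_mu_def)

definition gamma_density :: "nat \<Rightarrow> real \<Rightarrow> real" where
  "gamma_density \<alpha> x = (if x \<ge> 0 then x ^ (\<alpha> - 1) * exp (- x) / fact (\<alpha> - 1) else 0)"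

end

theory Submission
  imports Defs
begin

lemma deriv_D:
  "((\<lambda>t::real. - exp(-t) * (\<Sum>i\<le>j. t^i/fact i)) has_real_derivative exp(-t)*t^j/fact j) (at t)"
proof (induction j)
  case 0
  then show ?case by (auto intro!: derivative_eq_intros)
next
  case (Suc j)
  have d1: "((\<lambda>t::real. exp(-t) * t^Suc j) has_real_derivative
      (-exp(-t)*t^Suc j + exp(-t)*(real (Suc j) * t^j))) (at t)"
    by (rule derivative_eq_intros refl)+ simp
  have d2: "((\<lambda>t::real. - exp(-t) * (t^Suc j/fact (Suc j))) has_real_derivative
      (exp(-t)*t^Suc j/fact (Suc j) - exp(-t)*t^j/fact j)) (at t)"
  proof -
    have "((\<lambda>t::real. (-1/fact (Suc j)) * (exp(-t) * t^Suc j)) has_real_derivative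
      (-1/fact (Suc j)) * (-exp(-t)*t^Suc j + exp(-t)*(real (Suc j) * t^j))) (at t)"
      by (rule DERIV_cmult[OF d1])
    moreover have "(-1/fact (Suc j)) * (-exp(-t)*t^Suc j + exp(-t)*(real (Suc j) * t^j)) =
       exp(-t)*t^Suc j/fact (Suc j) - exp(-t)*t^j/fact j"
      by (simp add: field_simps del: fact_Suc) (simp add: algebra_simps)
    ultimately show ?thesis by simp
  qed
  have fe: "(\<lambda>t::real. - exp(-t) * (\<Sum>i\<le>Suc j. t^i/fact i)) =
     (\<lambda>t. - exp(-t) * (\<Sum>i\<le>j. t^i/fact i) + (- exp(-t) * (t^Suc j/fact (Suc j))))"
    by (simp add: algebra_simps)
  show ?case unfolding fe using DERIV_add[OF Suc.IH d2] by simp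
qed

lemma lim_L: "((\<lambda>y::real. exp(-y) * (\<Sum>i\<le>j. y^i/fact i)) \<longlongrightarrow> 0) at_top"
proof -
  have "((\<lambda>y::real. \<Sum>i\<le>j. (y^i/exp y)/fact i) \<longlongrightarrow> 0) at_top"
    by (intro tendsto_null_sum tendsto_divide_zero tendsto_power_div_exp_0)
  moreover have "(\<Sum>i\<le>j. (y^i/exp y)/fact i) = exp(-y) * (\<Sum>i\<le>j. y^i/fact i)" for y :: real
    by (simp add: sum_distrib_left exp_minus field_simps)
  ultimately show ?thesis by simp
qed

lemma int_A:
  fixes x :: real assumes "x \<ge> 0"
  shows "((\<lambda>t. exp(-t) * t^j / fact j) has_integral (exp(-x) * (\<Sum>i\<le>j. x^i/fact i))) {x..}"
proof (rule has_integral_to_inf)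
  show "(\<lambda>t. exp(-t) * t^j / fact j) integrable_on {x..y}" for y
    by (intro integrable_continuous_interval continuous_intros) auto
  show "0 \<le> exp(-y) * y^j / fact j" if "x \<le> y" for y
    using that assms by simp
  have hI: "((\<lambda>t. exp(-t) * t^j / fact j) has_integral
      (- exp(-y) * (\<Sum>i\<le>j. y^i/fact i)) - (- exp(-x) * (\<Sum>i\<le>j. x^i/fact i))) {x..y}"
    if "x \<le> y" for y
    using that
  proof (intro fundamental_theorem_of_calculus)
    fix t :: real
    show "((\<lambda>t. - exp(-t) * (\<Sum>i\<le>j. t^i/fact i)) has_vector_derivative exp(-t) * t^j / fact j) (at t within {x..y})"
      using deriv_D[of j t] unfolding has_real_derivative_iff_has_vector_derivative[symmetric]
      by (rule DERIV_subset) simp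
  qed
  have "\<forall>\<^sub>F y in at_top. integral {x..y} (\<lambda>t. exp(-t) * t^j / fact j) =
      (- exp(-y) * (\<Sum>i\<le>j. y^i/fact i)) - (- exp(-x) * (\<Sum>i\<le>j. x^i/fact i))"
    by (rule eventually_mono[OF eventually_ge_at_top[of x]]) (rule integral_unique[OF hI])
  moreover have "((\<lambda>y. (- exp(-y) * (\<Sum>i\<le>j. y^i/fact i)) - (- exp(-x) * (\<Sum>i\<le>j. x^i/fact i)))
     \<longlongrightarrow> - 0 - (- exp(-x) * (\<Sum>i\<le>j. x^i/fact i))) at_top"
    using lim_L[of j] by (intro tendsto_intros) (simp add: tendsto_minus_cancel_left[symmetric])
  ultimately show "((\<lambda>y. integral {x..y} (\<lambda>t. exp(-t) * t^j / fact j)) \<longlongrightarrow> exp(-x) * (\<Sum>i\<le>j. x^i/fact i)) at_top"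
    by (simp add: filterlim_cong tendsto_cong)
qed

lemma swap_lemma:
  fixes c g :: "nat \<Rightarrow> real"
  shows "(\<Sum>j\<le>N. c j * (\<Sum>i\<le>j. g i)) = (\<Sum>i\<le>N. (\<Sum>j=i..N. c j) * g i)"
proof (induction N)
  case 0
  then show ?case by simp
next
  case (Suc N)
  have "(\<Sum>i\<le>Suc N. (\<Sum>j=i..Suc N. c j) * g i) =
        (\<Sum>i\<le>N. (\<Sum>j=i..Suc N. c j) * g i) + c (Suc N) * g (Suc N)"
    by simp
  also have "(\<Sum>i\<le>N. (\<Sum>j=i..Suc N. c j) * g i) = (\<Sum>i\<le>N. (\<Sum>j=i..N. c j) * g i + c (Suc N) * g i)"
    by (intro sum.cong refl) (simp add: sum.cl_ivl_Suc algebra_simps)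
  finally show ?case using Suc.IH by (simp add: sum.distrib sum_distrib_left algebra_simps)
qed

definition dd :: "nat \<Rightarrow> nat \<Rightarrow> nat \<Rightarrow> nat" where
  "dd n m j = (m + (n - j)) choose (n - j)"

lemma hockey:
  assumes "i \<le> n"
  shows "(\<Sum>j=i..n. dd n m j) = dd n (Suc m) i"
proof -
  have "(\<Sum>j=i..n. dd n m j) = (\<Sum>k\<le>n-i. (m + k) choose k)"
    by (rule sum.reindex_bij_witness[where i="\<lambda>k. n - k" and j="\<lambda>j. n - j"])
       (use assms in \<open>auto simp: dd_def\<close>)
  also have "\<dots> = dd n (Suc m) i" by (simp add: sum_choose_lower dd_def)
  finally show ?thesis .
qed

lemma dd_pos: "dd n m j > 0" by (simp add: dd_def)

definition PP :: "nat \<Rightarrow> nat \<Rightarrow> real \<Rightarrow> real" where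
  "PP n m x = exp(-x) * (\<Sum>j\<le>n. real (dd n m j) * x^j / fact j) / real (dd n m 0)"

lemma sum_zero_pow: "(\<Sum>i\<le>n. (a i :: real) * 0^i / fact i) = a 0"
proof -
  have "(\<Sum>i\<le>n. (a i :: real) * 0^i / fact i) = (\<Sum>i\<in>{0}. (a i :: real) * 0^i / fact i)"
    by (rule sum.mono_neutral_right) auto
  then show ?thesis by simp
qed

lemma int_B:
  fixes x :: real assumes "x \<ge> 0"
  shows "(PP n m has_integral exp(-x) * (\<Sum>i\<le>n. real (dd n (Suc m) i) * x^i / fact i) / real (dd n m 0)) {x..}"
proof -
  define D where "D = real (dd n m 0)"
  have "((\<lambda>t. \<Sum>j\<le>n. (real (dd n m j) / D) * (exp(-t) * t^j / fact j)) has_integral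
        (\<Sum>j\<le>n. (real (dd n m j) / D) * (exp(-x) * (\<Sum>i\<le>j. x^i/fact i)))) {x..}"
    by (intro has_integral_sum has_integral_mult_right int_A assms) auto
  moreover have "(\<lambda>t. \<Sum>j\<le>n. (real (dd n m j) / D) * (exp(-t) * t^j / fact j)) = PP n m"
    unfolding PP_def D_def sum_divide_distrib sum_distrib_left
    by (rule ext, rule sum.cong) (auto simp: field_simps)
  moreover have "(\<Sum>j\<le>n. (real (dd n m j) / D) * (exp(-x) * (\<Sum>i\<le>j. x^i/fact i))) =
      exp(-x) / D * (\<Sum>j\<le>n. real (dd n m j) * (\<Sum>i\<le>j. x^i/fact i))"
    by (simp add: sum_distrib_left algebra_simps)
  moreover have "(\<Sum>j\<le>n. real (dd n m j) * (\<Sum>i\<le>j. x^i/fact i)) =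
      (\<Sum>i\<le>n. real (dd n (Suc m) i) * x^i / fact i)"
    unfolding swap_lemma
  proof (intro sum.cong refl)
    fix i assume "i \<in> {..n}"
    then have "(\<Sum>j=i..n. real (dd n m j)) = real (dd n (Suc m) i)"
      using hockey[of i n m] by (simp flip: of_nat_sum)
    then show "(\<Sum>j=i..n. real (dd n m j)) * (x^i/fact i) = real (dd n (Suc m) i) * x^i / fact i"
      by simp
  qed
  ultimately show ?thesis by (simp add: D_def)
qed

lemma main_lemma:
  fixes x :: real assumes "x \<ge> 0"
  shows "iter_tail (gamma_density (Suc n)) (Suc m) x = PP n m x"
  using assms
proof (induction m arbitrary: x)
  case 0
  have "integral {x..} (gamma_density (Suc n)) = integral {x..} (\<lambda>t. exp(-t) * t^n / fact n)"
    using 0 by (intro integral_cong) (auto simp: gamma_density_def)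
  also have "\<dots> = exp(-x) * (\<Sum>i\<le>n. x^i/fact i)"
    using int_A[OF 0] by (rule integral_unique)
  finally show ?case by (simp add: PP_def dd_def)
next
  case (Suc m)
  have e1: "integral {y..} (iter_tail (gamma_density (Suc n)) (Suc m)) = integral {y..} (PP n m)"
    if "y \<ge> 0" for y :: real
    using that by (intro integral_cong Suc.IH) auto
  have i1: "integral {x..} (PP n m) = exp(-x) * (\<Sum>i\<le>n. real (dd n (Suc m) i) * x^i / fact i) / real (dd n m 0)"
    using int_B[OF Suc.prems] by (rule integral_unique)
  have i0: "integral {0..} (PP n m) = real (dd n (Suc m) 0) / real (dd n m 0)"
    using int_B[of 0 n m] by (simp add: integral_unique sum_zero_pow)
  have p1: "real (dd n m 0) > 0" "real (dd n (Suc m) 0) > 0" using dd_pos by auto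
  show ?case
  proof -
    have "iter_tail (gamma_density (Suc n)) (Suc (Suc m)) x =
      integral {x..} (iter_tail (gamma_density (Suc n)) (Suc m)) / integral {0..} (iter_tail (gamma_density (Suc n)) (Suc m))"
      by (simp only: iter_tail_Suc iter_mu_def) simp
    also have "\<dots> = integral {x..} (PP n m) / integral {0..} (PP n m)"
      using Suc.prems by (simp only: e1 order_refl)
    also have "\<dots> = PP n (Suc m) x"
      using p1 by (simp add: i1 i0 PP_def)
    finally show ?thesis .
  qed
qed

theorem theorem3:
  fixes \<alpha> s :: nat and x :: real
  assumes "\<alpha> \<ge> 2" and "s \<ge> 2" and "x \<ge> 0"
  shows "iter_tail (gamma_density \<alpha>) s x =
           exp (- x) + exp (- x) / real ((\<alpha> + s - 2) choose (\<alpha> - 1)) *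
             (\<Sum>l = 1..\<alpha> - 1. real ((s + \<alpha> - l - 2) choose (\<alpha> - l - 1)) * x ^ l / fact l)"
proof -
  obtain n where n: "\<alpha> = Suc n" using assms(1) by (cases \<alpha>) auto
  obtain m where m: "s = Suc m" using assms(2) by (cases s) auto
  have D: "(\<alpha> + s - 2) choose (\<alpha> - 1) = dd n m 0" by (simp add: n m dd_def add.commute)
  have Dp: "real (dd n m 0) > 0" using dd_pos by simp
  have terms: "(\<Sum>l = 1..\<alpha> - 1. real ((s + \<alpha> - l - 2) choose (\<alpha> - l - 1)) * x ^ l / fact l)
      = (\<Sum>l = 1..n. real (dd n m l) * x ^ l / fact l)"
    by (intro sum.cong) (auto simp: n m dd_def)
  have split: "(\<Sum>j\<le>n. real (dd n m j) * x^j / fact j) = real (dd n m 0) + (\<Sum>l = 1..n. real (dd n m l) * x ^ l / fact l)"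
    by (simp add: atMost_atLeast0 sum.atLeast_Suc_atMost)
  have "iter_tail (gamma_density \<alpha>) s x = PP n m x"
    using main_lemma[OF assms(3)] by (simp add: n m)
  also have "\<dots> = exp (- x) + exp (- x) / real (dd n m 0) * (\<Sum>l = 1..n. real (dd n m l) * x ^ l / fact l)"
    unfolding PP_def split using Dp by (simp add: field_simps)
  finally show ?thesis by (simp only: D terms)
qed

end
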